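(* For every integer $r\ge1$, $\big|\mathrm{Var}(\mu^{(r+1)})-\mathrm{Var}(\mu^{(r)})\big|\le b$.
   Context: Fix an integer $b\ge2$. For $n\in\mathbb{N}$ with base-$b$ digits $n_k$, $s(n):=\sum_kn_k$. For $r,n\in\mathbb{N}$, $\Delta^{(r)}(n):=s(n+r)-s(n)$, and $\mu^{(r)}(d):=\lim_{N\to\infty}\frac1N|\{n<N:\Delta^{(r)}(n)=d\}|$ for $d\in\mathbb{Z}$; these limits exist and $\mu^{(r)}$ is a probability measure on $\mathbb{Z}$ with finite moments. $\mathrm{Var}(\mu^{(r)})$ is its variance. *)

theory Defs
  imports "HOL-Analysis.Analysis"
begin

text \<open>Base-b digit sum: the k-th digit of n is (n div b^k) mod b; for b \<ge> 2 all
  digits with index k > n vanish, so summing over k \<le> n gives the full digit sum.\<close>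
definition digit_sum :: "nat \<Rightarrow> nat \<Rightarrow> nat" where
  "digit_sum b n = (\<Sum>k\<le>n. (n div b ^ k) mod b)"

definition Delta :: "nat \<Rightarrow> nat \<Rightarrow> nat \<Rightarrow> int" where
  "Delta b r n = int (digit_sum b (n + r)) - int (digit_sum b n)"

definition mu :: "nat \<Rightarrow> nat \<Rightarrow> int \<Rightarrow> real" where
  "mu b r d = lim (\<lambda>N. real (card {n. n < N \<and> Delta b r n = d}) / real N)"

definition variance_int :: "(int \<Rightarrow> real) \<Rightarrow> real" where
  "variance_int p = (\<Sum>\<^sub>\<infinity>d\<in>UNIV. (real_of_int d)\<^sup>2 * p d) - (\<Sum>\<^sub>\<infinity>d\<in>UNIV. real_of_int d * p d)\<^sup>2"

end

theory Submission
  imports Defs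
begin


lemma ds_ext:
  assumes "b \<ge> 2" "K \<ge> n"
  shows "digit_sum b n = (\<Sum>k\<le>K. (n div b ^ k) mod b)"
proof -
  have z: "(n div b ^ k) mod b = 0" if "k > n" for k
  proof -
    have "n < 2 ^ n" by (rule less_exp)
    also have "2 ^ n \<le> (2::nat) ^ k" using that by (simp add: power_increasing)
    also have "\<dots> \<le> b ^ k" using assms by (simp add: power_mono)
    finally show ?thesis by simp
  qed
  show ?thesis unfolding digit_sum_def
    by (rule sum.mono_neutral_left) (use assms z in auto)
qed

lemma ds_rec:
  assumes "b \<ge> 2"
  shows "digit_sum b n = n mod b + digit_sum b (n div b)"
proof -
  have "digit_sum b n = (\<Sum>k\<le>Suc n. (n div b ^ k) mod b)"
    using ds_ext[OF assms, of n "Suc n"] by simp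
  also have "\<dots> = n mod b + (\<Sum>k\<le>n. (n div b ^ Suc k) mod b)"
    by (simp only: sum.atMost_Suc_shift) simp
  also have "(\<Sum>k\<le>n. (n div b ^ Suc k) mod b) = (\<Sum>k\<le>n. ((n div b) div b ^ k) mod b)"
    by (simp add: div_mult2_eq)
  also have "\<dots> = digit_sum b (n div b)"
    using ds_ext[OF assms, of "n div b" n] by simp
  finally show ?thesis .
qed

lemma ds_digit:
  assumes "b \<ge> 2" "j < b"
  shows "digit_sum b (b * m + j) = j + digit_sum b m"
  using ds_rec[OF assms(1), of "b*m+j"] assms by simp

lemma Delta_rec:
  assumes "b \<ge> 2" "a < b" "j < b"
  shows "Delta b (b*q+a) (b*m+j) = (if j + a < b then int a + Delta b q m else int a - int b + Delta b (q+1) m)"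
proof (cases "j + a < b")
  case True
  have "b*m+j + (b*q+a) = b*(m+q) + (j+a)" by (simp add: algebra_simps)
  then have "digit_sum b (b*m+j+(b*q+a)) = j+a+digit_sum b (m+q)"
    using ds_digit[OF assms(1) True] by metis
  then show ?thesis using True ds_digit[OF assms(1) assms(3)]
    by (simp add: Delta_def)
next
  case False
  have e: "b*m+j + (b*q+a) = b*(m+(q+1)) + (j+a-b)" using False by (simp add: algebra_simps)
  have l: "j + a - b < b" using assms by simp
  have "digit_sum b (b*m+j+(b*q+a)) = (j+a-b)+digit_sum b (m+(q+1))"
    using ds_digit[OF assms(1) l] e by metis
  then show ?thesis using False ds_digit[OF assms(1) assms(3)]
    by (simp add: Delta_def of_nat_diff)
qed

lemma card_sum: "card {n. n < (N::nat) \<and> P n} = (\<Sum>n<N. if P n then 1 else 0)"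
proof (induction N)
  case 0 then show ?case by simp
next
  case (Suc N)
  have "{n. n < Suc N \<and> P n} = (if P N then insert N {n. n < N \<and> P n} else {n. n < N \<and> P n})"
    by (auto simp: less_Suc_eq)
  then show ?case using Suc by auto
qed

lemma sum_add_split: "(\<Sum>n<A+B. h n) = (\<Sum>n<A. h n) + (\<Sum>j<B. h (A + j::nat))"
  by (induction B) (auto simp: add.assoc)

lemma sum_block: "(\<Sum>n<b*N. h n) = (\<Sum>m<N. \<Sum>j<b. h (b*m + j::nat))"
proof (induction N)
  case 0 then show ?case by simp
next
  case (Suc N)
  have "(\<Sum>n<b * Suc N. h n) = (\<Sum>n<b*N + b. h n)" by (simp add: add.commute)
  then show ?case using Suc sum_add_split[of h "b*N" b] by simp
qed

definition cnt :: "nat \<Rightarrow> nat \<Rightarrow> int \<Rightarrow> nat \<Rightarrow> nat" where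
  "cnt b r d N = card {n. n < N \<and> Delta b r n = d}"

lemma cnt_rec:
  assumes "b \<ge> 2" "a < b"
  shows "cnt b (b*q+a) d (b*N) = (b-a) * cnt b q (d - int a) N + a * cnt b (q+1) (d - int a + int b) N"
proof -
  have inner: "(\<Sum>j<b. if Delta b (b*q+a) (b*m+j) = d then 1 else 0) =
     (b-a) * (if Delta b q m = d - int a then 1 else 0) + a * (if Delta b (q+1) m = d - int a + int b then (1::nat) else 0)" for m
  proof -
    have bb: "b = (b-a) + a" using assms by simp
    have "(\<Sum>j<b. if Delta b (b*q+a) (b*m+j) = d then 1 else 0) =
       (\<Sum>j<(b-a)+a. if Delta b (b*q+a) (b*m+j) = d then 1 else (0::nat))"
      using bb by metis
    also have "\<dots> = (\<Sum>j<b-a. if Delta b (b*q+a) (b*m+j) = d then 1 else 0) +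
       (\<Sum>j<a. if Delta b (b*q+a) (b*m+(b-a+j)) = d then 1 else 0)"
      by (rule sum_add_split)
    also have "(\<Sum>j<b-a. if Delta b (b*q+a) (b*m+j) = d then 1 else (0::nat)) =
       (\<Sum>j<b-a. if Delta b q m = d - int a then 1 else 0)"
      by (rule sum.cong) (use assms in \<open>auto simp: Delta_rec\<close>)
    also have "(\<Sum>j<a. if Delta b (b*q+a) (b*m+(b-a+j)) = d then 1 else (0::nat)) =
       (\<Sum>j<a. if Delta b (q+1) m = d - int a + int b then 1 else 0)"
    proof (rule sum.cong)
      fix j assume "j \<in> {..<a}"
      then have h: "b-a+j < b" and h2: "\<not> (b-a+j+a < b)" using assms by auto
      have "Delta b (b*q+a) (b*m+(b-a+j)) = int a - int b + Delta b (q+1) m"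
        using Delta_rec[OF assms(1,2) h, of q m] h2 by (simp only: if_False)
      then show "(if Delta b (b*q+a) (b*m+(b-a+j)) = d then 1 else (0::nat)) =
         (if Delta b (q+1) m = d - int a + int b then 1 else 0)" by auto
    qed simp
    finally show ?thesis by simp
  qed
  have "cnt b (b*q+a) d (b*N) = (\<Sum>m<N. \<Sum>j<b. if Delta b (b*q+a) (b*m+j) = d then 1 else 0)"
    unfolding cnt_def card_sum by (rule sum_block)
  also have "\<dots> = (\<Sum>m<N. (b-a) * (if Delta b q m = d - int a then 1 else 0) + a * (if Delta b (q+1) m = d - int a + int b then (1::nat) else 0))"
    using inner by simp
  also have "\<dots> = (b-a) * cnt b q (d - int a) N + a * cnt b (q+1) (d - int a + int b) N"
    unfolding cnt_def card_sum by (simp add: sum.distrib sum_distrib_left)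
  finally show ?thesis .
qed

lemma cnt_lip: "cnt b r d N \<le> cnt b r d (N+k) \<and> cnt b r d (N+k) \<le> cnt b r d N + k"
proof -
  have "cnt b r d (N+k) = cnt b r d N + (\<Sum>j<k. if Delta b r (N+j) = d then 1 else 0)"
    unfolding cnt_def card_sum by (rule sum_add_split)
  moreover have "(\<Sum>j<k. if Delta b r (N+j) = d then 1 else (0::nat)) \<le> (\<Sum>j<k. 1)"
    by (rule sum_mono) auto
  ultimately show ?thesis by simp
qed

lemma cnt_0: "cnt b r d 0 = 0" by (simp add: cnt_def)



lemma real_aux:
  fixes X T S N B :: real
  assumes "0\<le>T" "T\<le>S" "0\<le>X" "X\<le>N" "N>0" "S\<le>B" "0 \<le> S"
  shows "\<bar>(X+T)/(N+S) - X/N\<bar> \<le> 2*B/(N+S)"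
proof -
  have eq: "(X+T)/(N+S) - X/N = (T*N - X*S)/((N+S)*N)" using assms by (simp add: field_simps)
  have "T*N \<le> B*N" using assms by (intro mult_right_mono) auto
  moreover have "X*S \<le> N*B" using assms by (intro mult_mono) auto
  moreover have "0 \<le> T*N" "0 \<le> X*S" using assms by auto
  ultimately have "\<bar>T*N - X*S\<bar> \<le> 2*B*N" by (simp add: abs_le_iff algebra_simps)
  then have "\<bar>T*N - X*S\<bar>/((N+S)*N) \<le> 2*B*N/((N+S)*N)"
    using assms by (intro divide_right_mono) auto
  also have "2*B*N/((N+S)*N) = 2*B/(N+S)" using assms by simp
  finally have "\<bar>T*N - X*S\<bar>/((N+S)*N) \<le> 2*B/(N+S)" .
  moreover have "\<bar>(N+S)*N\<bar> = (N+S)*N" using assms by simp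
  ultimately show ?thesis by (simp add: eq abs_divide)
qed

lemma G:
  fixes f :: "nat \<Rightarrow> nat"
  assumes lip: "\<And>N k. f N \<le> f (N+k) \<and> f (N+k) \<le> f N + k" and f0: "f 0 = 0"
    and B: "B \<ge> 1" and M: "M \<ge> B"
  shows "\<bar>real (f M)/real M - real (f (B*(M div B)))/real (B*(M div B))\<bar> \<le> 2*real B/real M"
proof -
  define N where "N = B*(M div B)"
  define S where "S = M - N"
  have MN: "M = N + S" "S < B" using B unfolding N_def S_def
    by (simp_all add: minus_mult_div_eq_mod)
  have Npos: "N > 0" using B M unfolding N_def by (simp add: div_greater_zero_iff)
  have fl: "f N \<le> f M \<and> f M \<le> f N + S" using lip[of N S] MN by simp
  define T where "T = f M - f N"
  have T: "f M = f N + T" "T \<le> S" using fl unfolding T_def by auto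
  have fN: "f N \<le> N" using lip[of 0 N] f0 by simp
  have "\<bar>(real (f N) + real T)/(real N + real S) - real (f N)/real N\<bar> \<le> 2*real B/(real N + real S)"
    by (rule real_aux) (use T fN Npos MN in auto)
  then show ?thesis using MN T unfolding N_def[symmetric] by simp
qed


definition Lf :: "nat \<Rightarrow> int \<Rightarrow> real" where
  "Lf b d = (if d \<le> 1 \<and> (int b - 1) dvd (1 - d) then (real b - 1) / real b ^ (nat ((1 - d) div (int b - 1)) + 1) else 0)"

lemma Lf_g:
  assumes "b \<ge> 2"
  shows "Lf b (1 - int i * (int b - 1)) = (real b - 1) / real b ^ (i+1)"
proof -
  have c: "int b - 1 > 0" using assms by simp
  have "1 - (1 - int i * (int b - 1)) = int i * (int b - 1)" by simp
  moreover have "int i * (int b - 1) div (int b - 1) = int i" using c by simp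
  moreover have "1 - int i * (int b - 1) \<le> 1" using c by simp
  ultimately show ?thesis unfolding Lf_def by simp
qed

lemma Lf_out:
  assumes "b \<ge> 2" "\<forall>i. d \<noteq> 1 - int i * (int b - 1)"
  shows "Lf b d = 0"
proof (rule ccontr)
  assume "Lf b d \<noteq> 0"
  then have h: "d \<le> 1" "(int b - 1) dvd (1 - d)" unfolding Lf_def by (auto split: if_splits)
  then obtain k where k: "1 - d = (int b - 1) * k" by (auto elim: dvdE)
  have c: "int b - 1 > 0" using assms by simp
  have "k \<ge> 0"
  proof (rule ccontr)
    assume "\<not> k \<ge> 0"
    then have "(int b - 1) * k < 0" using c by (simp add: mult_pos_neg)
    then show False using k h by linarith
  qed
  then have "d = 1 - int (nat k) * (int b - 1)" using k[unfolded mult.commute[of "int b - 1" k]] by simp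
  then show False using assms by blast
qed


lemma Lf_rec:
  assumes "b \<ge> 2"
  shows "Lf b d = (if d = 1 then (real b - 1)/real b else 0) + Lf b (d + (int b - 1)) / real b"
proof (cases "\<exists>i. d = 1 - int i * (int b - 1)")
  case True
  then obtain i where i: "d = 1 - int i * (int b - 1)" by blast
  have c: "int b - 1 > 0" using assms by simp
  show ?thesis
  proof (cases i)
    case 0
    have "\<forall>j. d + (int b - 1) \<noteq> 1 - int j * (int b - 1)"
    proof
      fix j show "d + (int b - 1) \<noteq> 1 - int j * (int b - 1)"
      proof
        assume "d + (int b - 1) = 1 - int j * (int b - 1)"
        then have "(1 + int j) * (int b - 1) = 0" using i 0 by (simp add: algebra_simps)
        then show False using c by simp
      qed
    qed
    then show ?thesis using Lf_out[OF assms] Lf_g[OF assms, of 0] i 0 by simp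
  next
    case (Suc j)
    have "d \<noteq> 1" using i Suc c by simp
    moreover have e: "d + (int b - 1) = 1 - int j * (int b - 1)" using i Suc by (simp add: algebra_simps)
    moreover have "Lf b d = (real b - 1) / real b ^ (i+1)" using Lf_g[OF assms, of i] i by simp
    moreover have "Lf b (d + (int b - 1)) = (real b - 1) / real b ^ (j+1)"
      unfolding e by (rule Lf_g[OF assms])
    ultimately show ?thesis using Suc by simp
  qed
next
  case False
  then have "d \<noteq> 1" by (metis diff_zero mult_zero_left of_nat_0)
  moreover have "\<forall>j. d + (int b - 1) \<noteq> 1 - int j * (int b - 1)"
  proof
    fix j show "d + (int b - 1) \<noteq> 1 - int j * (int b - 1)"
    proof
      assume "d + (int b - 1) = 1 - int j * (int b - 1)"
      then have "d = 1 - int (Suc j) * (int b - 1)" by (simp add: algebra_simps)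
      then show False using False by blast
    qed
  qed
  ultimately show ?thesis using Lf_out[OF assms] False by simp
qed

lemma Lf_bounds:
  assumes "b \<ge> 2"
  shows "0 \<le> Lf b d \<and> Lf b d \<le> 1"
proof -
  have h2: "real b - 1 \<le> real b * real b ^ m" for m
  proof -
    have "1 \<le> real b ^ m" using assms by (simp add: one_le_power)
    then have "real b * 1 \<le> real b * real b ^ m" using assms by (intro mult_left_mono) auto
    then show ?thesis by simp
  qed
  have h3: "(real b - 1) / (real b * real b ^ m) \<le> 1" for m
  proof -
    have p: "real b * real b ^ m > 0" using assms by simp
    show ?thesis using h2[of m] p by (simp add: divide_le_eq)
  qed
  show ?thesis using assms h3 unfolding Lf_def by auto
qed


lemma conv_crit:
  fixes f :: "nat \<Rightarrow> nat"
  assumes lip: "\<And>N k. f N \<le> f (N+k) \<and> f (N+k) \<le> f N + k" and f0: "f 0 = 0"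
    and H: "\<And>\<epsilon>. \<epsilon> > 0 \<Longrightarrow> \<exists>B N0. B \<ge> 1 \<and> (\<forall>N\<ge>N0. N > 0 \<longrightarrow> \<bar>real (f (B*N)) / real (B*N) - l\<bar> < \<epsilon>)"
  shows "(\<lambda>M. real (f M) / real M) \<longlonglongrightarrow> l"
proof (rule LIMSEQ_I)
  fix e :: real assume e: "0 < e"
  then obtain B N0 where B: "B \<ge> 1" and N0: "\<forall>N\<ge>N0. N > 0 \<longrightarrow> \<bar>real (f (B*N)) / real (B*N) - l\<bar> < e/2"
    using H[of "e/2"] by auto
  define no where "no = max (B * max N0 1) (nat \<lceil>4*real B/e\<rceil> + 1)"
  show "\<exists>no. \<forall>n\<ge>no. norm (real (f n) / real n - l) < e"
  proof (intro exI allI impI)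
    fix M assume M: "M \<ge> no"
    have BM: "B * max N0 1 \<le> M" using M unfolding no_def by simp
    have "B \<le> B * max N0 1" by simp
    then have MB: "M \<ge> B" using BM by linarith
    have Bp: "0 < B" using B by simp
    have "max N0 1 * B \<le> M" using BM by (simp only: mult.commute)
    then have "max N0 1 \<le> M div B" using less_eq_div_iff_mult_less_eq[OF Bp] by blast
    then have d: "M div B \<ge> N0" "M div B > 0" by auto
    have Mbig: "real M > 4*real B/e" using M unfolding no_def by linarith
    have "2*real B/real M < e/2"
    proof -
      have "4*real B < e * real M" using Mbig e by (simp add: field_simps)
      moreover have "real M > 0" using Mbig e B by (smt (verit) divide_nonneg_pos of_nat_0_le_iff)
      ultimately show ?thesis by (simp add: field_simps)
    qed
    moreover have "\<bar>real (f M)/real M - real (f (B*(M div B)))/real (B*(M div B))\<bar> \<le> 2*real B/real M"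
      by (rule G[OF lip f0 B MB])
    moreover have "\<bar>real (f (B*(M div B)))/real (B*(M div B)) - l\<bar> < e/2" using N0 d by auto
    ultimately show "norm (real (f M) / real M - l) < e" unfolding real_norm_def by arith
  qed
qed

lemma conv_sub:
  fixes f :: "nat \<Rightarrow> nat"
  assumes lip: "\<And>N k. f N \<le> f (N+k) \<and> f (N+k) \<le> f N + k" and f0: "f 0 = 0"
    and B: "B \<ge> 1" and lim: "(\<lambda>N. real (f (B*N)) / real (B*N)) \<longlonglongrightarrow> l"
  shows "(\<lambda>M. real (f M) / real M) \<longlonglongrightarrow> l"
proof (rule conv_crit[OF lip f0])
  fix e :: real assume "e > 0"
  then obtain N0 where "\<forall>N\<ge>N0. norm (real (f (B*N)) / real (B*N) - l) < e"
    using lim unfolding LIMSEQ_iff by blast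
  then show "\<exists>B N0. B \<ge> 1 \<and> (\<forall>N\<ge>N0. N > 0 \<longrightarrow> \<bar>real (f (B*N)) / real (B*N) - l\<bar> < e)"
    using B by auto
qed



lemma mu_cnt: "mu b r d = lim (\<lambda>N. real (cnt b r d N) / real N)"
  by (simp add: mu_def cnt_def)

lemma cnt_zero: "cnt b 0 d N = (if d = 0 then N else 0)"
  by (auto simp: cnt_def Delta_def)

lemma cnt_le: "cnt b r d N \<le> N"
  using cnt_lip[of b r d 0 N] cnt_0[of b r d] by simp

lemma x_bounds: "0 \<le> real (cnt b r d N) / real N \<and> real (cnt b r d N) / real N \<le> 1"
proof (cases "N = 0")
  case False
  then show ?thesis using cnt_le[of b r d N] by (simp add: divide_le_eq)
qed simp

lemma rec1:
  assumes "b \<ge> 2"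
  shows "real (cnt b 1 d (b*N)) = (real b - 1) * (if d = 1 then real N else 0) + real (cnt b 1 (d + (int b - 1)) N)"
proof -
  have "cnt b (b*0+1) d (b*N) = (b-1) * cnt b 0 (d - int 1) N + 1 * cnt b (0+1) (d - int 1 + int b) N"
    using assms by (intro cnt_rec) auto
  then have "cnt b 1 d (b*N) = (b-1) * cnt b 0 (d - 1) N + cnt b 1 (d + (int b - 1)) N"
    by (simp add: algebra_simps)
  then show ?thesis using assms by (simp add: cnt_zero of_nat_diff)
qed

lemma conv1:
  assumes b: "b \<ge> 2"
  shows "(\<lambda>N. real (cnt b 1 d N) / real N) \<longlonglongrightarrow> Lf b d"
proof -
  have bound: "\<forall>d N. N > 0 \<longrightarrow> \<bar>real (cnt b 1 d (b^k*N)) / real (b^k*N) - Lf b d\<bar> \<le> 1 / real b ^ k" for k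
  proof (induction k)
    case 0
    show ?case
    proof (intro allI impI)
      fix d N
      show "\<bar>real (cnt b 1 d (b^0*N)) / real (b^0*N) - Lf b d\<bar> \<le> 1 / real b ^ 0"
        using x_bounds[of b 1 d N] Lf_bounds[OF b, of d] unfolding power_0 mult_1 by arith
    qed
  next
    case (Suc k)
    show ?case
    proof (intro allI impI)
      fix d :: int and N :: nat assume N: "N > 0"
      define M where "M = b^k*N"
      have M: "M > 0" using N b unfolding M_def by simp
      have e1: "b^Suc k * N = b * M" unfolding M_def by simp
      have bp: "real b > 0" using b by simp
      have eqq: "real (cnt b 1 d (b*M)) / real (b*M) - Lf b d =
          (real (cnt b 1 (d + (int b - 1)) M) / real M - Lf b (d + (int b - 1))) / real b"
        unfolding rec1[OF b] of_nat_mult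
        apply (subst Lf_rec[OF b, of d])
        using M bp by (cases "d = 1") (simp_all add: field_simps)
      have ih: "\<bar>real (cnt b 1 (d + (int b - 1)) M) / real M - Lf b (d + (int b - 1))\<bar> \<le> 1 / real b ^ k"
        using Suc N unfolding M_def by blast
      have "\<bar>real (cnt b 1 (d + (int b - 1)) M) / real M - Lf b (d + (int b - 1))\<bar> / real b \<le> (1 / real b ^ k) / real b"
        by (rule divide_right_mono[OF ih]) simp
      then have "\<bar>real (cnt b 1 d (b*M)) / real (b*M) - Lf b d\<bar> \<le> (1 / real b ^ k) / real b"
        unfolding eqq abs_divide using bp by simp
      then show "\<bar>real (cnt b 1 d (b^Suc k*N)) / real (b^Suc k*N) - Lf b d\<bar> \<le> 1 / real b ^ Suc k"
        unfolding e1 by (simp add: field_simps)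
    qed
  qed
  show ?thesis
  proof (rule conv_crit)
    show "cnt b 1 d N \<le> cnt b 1 d (N + k) \<and> cnt b 1 d (N + k) \<le> cnt b 1 d N + k" for N k
      by (rule cnt_lip)
    show "cnt b 1 d 0 = 0" by (rule cnt_0)
    fix e :: real assume e: "e > 0"
    obtain k where k: "(1 / real b) ^ k < e" using real_arch_pow_inv[OF e, of "1 / real b"] b by auto
    have "\<forall>N\<ge>1. N > 0 \<longrightarrow> \<bar>real (cnt b 1 d (b^k*N)) / real (b^k*N) - Lf b d\<bar> < e"
    proof (intro allI impI)
      fix N :: nat assume "N \<ge> 1" "N > 0"
      then have "\<bar>real (cnt b 1 d (b^k*N)) / real (b^k*N) - Lf b d\<bar> \<le> 1 / real b ^ k"
        using bound[of k] by blast
      moreover have "1 / real b ^ k < e" using k by (simp add: power_one_over)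
      ultimately show "\<bar>real (cnt b 1 d (b^k*N)) / real (b^k*N) - Lf b d\<bar> < e" by linarith
    qed
    moreover have "b^k \<ge> 1" using b by simp
    ultimately show "\<exists>B N0. B \<ge> 1 \<and> (\<forall>N\<ge>N0. N > 0 \<longrightarrow> \<bar>real (cnt b 1 d (B*N)) / real (B*N) - Lf b d\<bar> < e)"
      by blast
  qed
qed



lemma xrec:
  assumes b: "b \<ge> 2" and a: "a < b" and N: "N > 0"
  shows "real (cnt b (b*q+a) d (b*N)) / real (b*N) =
    (real (b-a) * (real (cnt b q (d - int a) N) / real N) + real a * (real (cnt b (q+1) (d - int a + int b) N) / real N)) / real b"
proof -
  have "real (cnt b (b*q+a) d (b*N)) = real (b-a) * real (cnt b q (d - int a) N) + real a * real (cnt b (q+1) (d - int a + int b) N)"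
    unfolding cnt_rec[OF b a] by simp
  then show ?thesis using N b by (simp add: field_simps)
qed

lemma conv_all:
  assumes b: "b \<ge> 2"
  shows "convergent (\<lambda>N. real (cnt b r d N) / real N)"
proof (induction r arbitrary: d rule: less_induct)
  case (less r)
  consider "r = 0" | "r = 1" | "r \<ge> 2" by linarith
  then show ?case
  proof cases
    case 1
    have "(\<lambda>N. real (cnt b r d N) / real N) \<longlonglongrightarrow> (if d = 0 then 1 else 0)"
    proof (rule Lim_transform_eventually[OF tendsto_const])
      show "\<forall>\<^sub>F N in sequentially. (if d = 0 then 1 else 0) = real (cnt b r d N) / real N"
        using eventually_gt_at_top[of 0] by eventually_elim (simp add: 1 cnt_zero)
    qed
    then show ?thesis by (auto simp: convergent_def)
  next
    case 2
    then show ?thesis using conv1[OF b, of d] by (auto simp: convergent_def)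
  next
    case 3
    define q where "q = r div b"
    define a where "a = r mod b"
    have r: "b*q + a = r" unfolding q_def a_def by (rule mult_div_mod_eq)
    have ab: "a < b" using b unfolding a_def by simp
    have qr: "q < r" using b 3 unfolding q_def by simp
    have lip: "cnt b r d N \<le> cnt b r d (N + k) \<and> cnt b r d (N + k) \<le> cnt b r d N + k" for N k
      by (rule cnt_lip)
    have xr: "real (cnt b r d (b*N)) / real (b*N) =
      (real (b-a) * (real (cnt b q (d - int a) N) / real N) + real a * (real (cnt b (q+1) (d - int a + int b) N) / real N)) / real b"
      if "N > 0" for N
      using xrec[OF b ab that, of q d] unfolding r .
    show ?thesis
    proof (cases "a = 0")
      case True
      obtain l where l: "(\<lambda>N. real (cnt b q d N) / real N) \<longlonglongrightarrow> l"
        using less[OF qr] unfolding convergent_def by blast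
      have "(\<lambda>N. real (cnt b r d (b*N)) / real (b*N)) \<longlonglongrightarrow> l"
      proof (rule Lim_transform_eventually[OF l])
        show "\<forall>\<^sub>F N in sequentially. real (cnt b q d N) / real N = real (cnt b r d (b*N)) / real (b*N)"
          using eventually_gt_at_top[of 0] by eventually_elim (use True b xr in simp)
      qed
      then have "(\<lambda>N. real (cnt b r d N) / real N) \<longlonglongrightarrow> l"
        using b by (intro conv_sub[OF lip cnt_0]) auto
      then show ?thesis by (auto simp: convergent_def)
    next
      case False
      have q1r: "q + 1 < r"
      proof -
        have "q + 1 < b*q + a"
        proof (cases "q = 0")
          case True then show ?thesis using r 3 by simp
        next
          case False
          then have "q + 1 \<le> 2*q" by simp
          also have "\<dots> \<le> b*q" using b by simp
          finally show ?thesis using \<open>a \<noteq> 0\<close> by simp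
        qed
        then show ?thesis using r by simp
      qed
      obtain l1 where l1: "(\<lambda>N. real (cnt b q (d - int a) N) / real N) \<longlonglongrightarrow> l1"
        using less[OF qr] unfolding convergent_def by blast
      obtain l2 where l2: "(\<lambda>N. real (cnt b (q+1) (d - int a + int b) N) / real N) \<longlonglongrightarrow> l2"
        using less[OF q1r] unfolding convergent_def by blast
      have "(\<lambda>N. (real (b-a) * (real (cnt b q (d - int a) N) / real N) + real a * (real (cnt b (q+1) (d - int a + int b) N) / real N)) / real b)
          \<longlonglongrightarrow> (real (b-a) * l1 + real a * l2) / real b"
        by (intro tendsto_intros l1 l2) (use b in simp)
      then have "(\<lambda>N. real (cnt b r d (b*N)) / real (b*N)) \<longlonglongrightarrow> (real (b-a) * l1 + real a * l2) / real b"
        by (rule Lim_transform_eventually)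
           (use eventually_gt_at_top[of 0] in \<open>eventually_elim, use xr in simp\<close>)
      then have "(\<lambda>N. real (cnt b r d N) / real N) \<longlonglongrightarrow> (real (b-a) * l1 + real a * l2) / real b"
        using b by (intro conv_sub[OF lip cnt_0]) auto
      then show ?thesis by (auto simp: convergent_def)
    qed
  qed
qed

lemma mu_lim:
  assumes b: "b \<ge> 2"
  shows "(\<lambda>N. real (cnt b r d N) / real N) \<longlonglongrightarrow> mu b r d"
  using conv_all[OF b, of r d] unfolding mu_cnt convergent_LIMSEQ_iff .

lemma mu_rec:
  assumes b: "b \<ge> 2"
  shows "mu b r d = (real (b - r mod b) * mu b (r div b) (d - int (r mod b))
      + real (r mod b) * mu b (r div b + 1) (d - int (r mod b) + int b)) / real b"
proof -
  define q where "q = r div b"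
  define a where "a = r mod b"
  have r: "b*q + a = r" unfolding q_def a_def by (rule mult_div_mod_eq)
  have ab: "a < b" using b unfolding a_def by simp
  have xr: "real (cnt b r d (b*N)) / real (b*N) =
      (real (b-a) * (real (cnt b q (d - int a) N) / real N) + real a * (real (cnt b (q+1) (d - int a + int b) N) / real N)) / real b"
      if "N > 0" for N
      using xrec[OF b ab that, of q d] unfolding r .
  have sm: "strict_mono (\<lambda>N::nat. b*N)" using b by (auto simp: strict_mono_def)
  have A: "(\<lambda>N. real (cnt b r d (b*N)) / real (b*N)) \<longlonglongrightarrow> mu b r d"
    using LIMSEQ_subseq_LIMSEQ[OF mu_lim[OF b, of r d] sm] by (simp add: o_def)
  have "(\<lambda>N. (real (b-a) * (real (cnt b q (d - int a) N) / real N) + real a * (real (cnt b (q+1) (d - int a + int b) N) / real N)) / real b)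
          \<longlonglongrightarrow> (real (b-a) * mu b q (d - int a) + real a * mu b (q+1) (d - int a + int b)) / real b"
    by (intro tendsto_intros mu_lim[OF b]) (use b in simp)
  then have B: "(\<lambda>N. real (cnt b r d (b*N)) / real (b*N)) \<longlonglongrightarrow> (real (b-a) * mu b q (d - int a) + real a * mu b (q+1) (d - int a + int b)) / real b"
    by (rule Lim_transform_eventually)
       (use eventually_gt_at_top[of 0] in \<open>eventually_elim, use xr in simp\<close>)
  show ?thesis using LIMSEQ_unique[OF A B] unfolding q_def a_def .
qed

lemma mu0: "mu b 0 d = (if d = 0 then 1 else 0)"
proof -
  have "(\<lambda>N. real (cnt b 0 d N) / real N) \<longlonglongrightarrow> (if d = 0 then 1 else 0)"
  proof (rule Lim_transform_eventually[OF tendsto_const])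
    show "\<forall>\<^sub>F N in sequentially. (if d = 0 then 1 else 0) = real (cnt b 0 d N) / real N"
      using eventually_gt_at_top[of 0] by eventually_elim (simp add: cnt_zero)
  qed
  then show ?thesis unfolding mu_cnt by (rule limI)
qed

lemma mu1: "b \<ge> 2 \<Longrightarrow> mu b 1 d = Lf b d"
  unfolding mu_cnt by (rule limI[OF conv1])



definition MOM :: "(int \<Rightarrow> real) \<Rightarrow> real \<Rightarrow> real \<Rightarrow> real \<Rightarrow> bool" where
  "MOM p s0 s1 s2 \<longleftrightarrow> (p has_sum s0) UNIV \<and> ((\<lambda>d. real_of_int d * p d) has_sum s1) UNIV
     \<and> ((\<lambda>d. (real_of_int d)^2 * p d) has_sum s2) UNIV"

lemma shift_hs:
  assumes "(F has_sum S) (UNIV::int set)"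
  shows "((\<lambda>d. F (d - t)) has_sum S) UNIV"
proof -
  have "bij_betw (\<lambda>d::int. d - t) UNIV UNIV"
    by (rule bij_betwI[where g="\<lambda>d. d + t"]) auto
  then show ?thesis using assms by (subst has_sum_reindex_bij_betw) auto
qed

lemma MOM_shift:
  assumes "MOM p s0 s1 s2"
  shows "MOM (\<lambda>d. p (d - t)) s0 (s1 + real_of_int t * s0) (s2 + 2 * real_of_int t * s1 + (real_of_int t)^2 * s0)"
proof -
  have h0: "(p has_sum s0) UNIV" and h1: "((\<lambda>d. real_of_int d * p d) has_sum s1) UNIV"
    and h2: "((\<lambda>d. (real_of_int d)^2 * p d) has_sum s2) UNIV" using assms by (auto simp: MOM_def)
  have g1: "((\<lambda>e. real_of_int e * p e + real_of_int t * p e) has_sum (s1 + real_of_int t * s0)) UNIV"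
    by (intro has_sum_add h1 has_sum_cmult_right h0)
  have g2: "((\<lambda>e. (real_of_int e)^2 * p e + 2 * real_of_int t * (real_of_int e * p e) + (real_of_int t)^2 * p e)
      has_sum (s2 + 2 * real_of_int t * s1 + (real_of_int t)^2 * s0)) UNIV"
    by (intro has_sum_add h2 has_sum_cmult_right h1 h0)
  have "((\<lambda>d. real_of_int d * p (d - t)) has_sum (s1 + real_of_int t * s0)) UNIV"
    using shift_hs[OF g1, of t] by (simp add: algebra_simps)
  moreover have "((\<lambda>d. (real_of_int d)^2 * p (d - t)) has_sum (s2 + 2 * real_of_int t * s1 + (real_of_int t)^2 * s0)) UNIV"
  proof -
    have "((\<lambda>d. (real_of_int (d - t))^2 * p (d - t) + 2 * real_of_int t * (real_of_int (d - t) * p (d - t)) + (real_of_int t)^2 * p (d - t))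
      has_sum (s2 + 2 * real_of_int t * s1 + (real_of_int t)^2 * s0)) UNIV"
      using shift_hs[OF g2, of t] by simp
    moreover have "(real_of_int (d - t))^2 * p (d - t) + 2 * real_of_int t * (real_of_int (d - t) * p (d - t)) + (real_of_int t)^2 * p (d - t)
       = (real_of_int d)^2 * p (d - t)" for d
      by (simp add: power2_eq_square algebra_simps)
    ultimately show ?thesis by simp
  qed
  ultimately show ?thesis using shift_hs[OF h0, of t] by (simp add: MOM_def)
qed

lemma MOM_lin:
  assumes "MOM p s0 s1 s2" "MOM p' t0 t1 t2"
  shows "MOM (\<lambda>d. \<alpha> * p d + \<beta> * p' d) (\<alpha> * s0 + \<beta> * t0) (\<alpha> * s1 + \<beta> * t1) (\<alpha> * s2 + \<beta> * t2)"
proof -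
  have a: "(p has_sum s0) UNIV" "((\<lambda>d. real_of_int d * p d) has_sum s1) UNIV"
    "((\<lambda>d. (real_of_int d)^2 * p d) has_sum s2) UNIV" using assms(1) by (auto simp: MOM_def)
  have b: "(p' has_sum t0) UNIV" "((\<lambda>d. real_of_int d * p' d) has_sum t1) UNIV"
    "((\<lambda>d. (real_of_int d)^2 * p' d) has_sum t2) UNIV" using assms(2) by (auto simp: MOM_def)
  have "((\<lambda>d. \<alpha> * p d + \<beta> * p' d) has_sum (\<alpha> * s0 + \<beta> * t0)) UNIV"
    by (intro has_sum_add has_sum_cmult_right a b)
  moreover have "((\<lambda>d. \<alpha> * (real_of_int d * p d) + \<beta> * (real_of_int d * p' d)) has_sum (\<alpha> * s1 + \<beta> * t1)) UNIV"
    by (intro has_sum_add has_sum_cmult_right a b)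
  moreover have "((\<lambda>d. \<alpha> * ((real_of_int d)^2 * p d) + \<beta> * ((real_of_int d)^2 * p' d)) has_sum (\<alpha> * s2 + \<beta> * t2)) UNIV"
    by (intro has_sum_add has_sum_cmult_right a b)
  ultimately show ?thesis by (simp add: MOM_def algebra_simps)
qed

lemma MOM_unique:
  assumes "MOM p s0 s1 s2" "MOM p t0 t1 t2"
  shows "s0 = t0 \<and> s1 = t1 \<and> s2 = t2"
  using assms unfolding MOM_def by (meson has_sum_unique)

lemma MOM_var:
  assumes "MOM p 1 0 s"
  shows "variance_int p = s"
proof -
  have "infsum (\<lambda>d. (real_of_int d)^2 * p d) UNIV = s" "infsum (\<lambda>d. real_of_int d * p d) UNIV = 0"
    using assms unfolding MOM_def by (auto intro: infsumI)
  then show ?thesis unfolding variance_int_def by simp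
qed

lemma MOM_eq: "MOM p s0 s1 s2 \<Longrightarrow> s0 = t0 \<Longrightarrow> s1 = t1 \<Longrightarrow> s2 = t2 \<Longrightarrow> MOM p t0 t1 t2"
  by simp

lemma MOM_step:
  assumes b: "b \<ge> 2"
    and S: "MOM (mu b (r div b)) S0 S1 S2" and T: "MOM (mu b (r div b + 1)) T0 T1 T2"
  defines "a \<equiv> real (r mod b)" and "B \<equiv> real b"
  shows "MOM (mu b r) (((B-a)*S0 + a*T0)/B) (((B-a)*(S1 + a*S0) + a*(T1 + (a-B)*T0))/B)
     (((B-a)*(S2 + 2*a*S1 + a^2*S0) + a*(T2 + 2*(a-B)*T1 + (a-B)^2*T0))/B)"
proof -
  have am: "r mod b < b" using b by simp
  have mr: "mu b r = (\<lambda>d. ((B - a)/B) * mu b (r div b) (d - int (r mod b)) + (a/B) * mu b (r div b + 1) (d - (int (r mod b) - int b)))"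
  proof
    fix d
    show "mu b r d = ((B - a)/B) * mu b (r div b) (d - int (r mod b)) + (a/B) * mu b (r div b + 1) (d - (int (r mod b) - int b))"
      using mu_rec[OF b, of r d] am b unfolding a_def B_def by (simp add: of_nat_diff field_simps)
  qed
  have "MOM (mu b r) ((B - a)/B * S0 + a/B * T0)
      ((B - a)/B * (S1 + real_of_int (int (r mod b)) * S0) + a/B * (T1 + real_of_int (int (r mod b) - int b) * T0))
      ((B - a)/B * (S2 + 2 * real_of_int (int (r mod b)) * S1 + (real_of_int (int (r mod b)))^2 * S0)
        + a/B * (T2 + 2 * real_of_int (int (r mod b) - int b) * T1 + (real_of_int (int (r mod b) - int b))^2 * T0))"
    unfolding mr by (intro MOM_lin MOM_shift S T)
  then show ?thesis
    by (rule MOM_eq) (simp_all add: a_def B_def add_divide_distrib)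
qed



lemma sum_geo2: "summable (\<lambda>n::nat. (real n + 1)^2 / 2^n)"
proof (rule summable_ratio_test[of "3/4" 4])
  fix n :: nat assume n: "n \<ge> 4"
  then have "real n * real n \<ge> 4 * real n" by (intro mult_right_mono) auto
  moreover have "2*(real n + 2)^2 = 2*(real n*real n) + 8*real n + 8" by (simp add: power2_eq_square algebra_simps)
  moreover have "3*(real n + 1)^2 = 3*(real n*real n) + 6*real n + 3" by (simp add: power2_eq_square algebra_simps)
  moreover have "real n \<ge> 4" using n by simp
  ultimately have k: "2*(real n + 2)^2 \<le> 3*(real n + 1)^2" by linarith
  have "(real n + 2)^2 / 2^(n+1) \<le> 3/4 * ((real n + 1)^2 / 2^n)"
    using k by (simp add: field_simps)
  then show "norm ((real (Suc n) + 1)^2 / 2^(Suc n)) \<le> 3/4 * norm ((real n + 1)^2 / 2^n)"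
    by (simp add: add.commute add.left_commute)
qed simp

lemma Lf_summ_gen:
  assumes b: "b \<ge> 2" and w: "\<And>d. \<bar>w d\<bar> \<le> (real_of_int d)^2 + 1"
  shows "(\<lambda>d. w d * Lf b d) summable_on UNIV"
proof -
  define g where "g i = 1 - int i * (int b - 1)" for i
  define c where "c = real b - 1"
  have c1: "c \<ge> 1" using b unfolding c_def by simp
  have inj: "inj g" unfolding g_def inj_def using b by auto
  have bound: "norm (norm (w (g i) * Lf b (g i))) \<le> (2 * c^3) * ((real i + 1)^2 / 2^i)" for i
  proof -
    define X where "X = (real i + 1) * c"
    have gi: "real_of_int (g i) = 1 - real i * c" unfolding g_def c_def by simp
    have f1: "\<bar>real_of_int (g i)\<bar> \<le> X" unfolding gi X_def using c1
      by (simp add: abs_le_iff algebra_simps) (smt (verit) mult_nonneg_nonneg of_nat_0_le_iff)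
    have X1: "X \<ge> 1" unfolding X_def using c1
      by (metis le_add_same_cancel2 mult_mono' of_nat_0_le_iff mult_1 order.trans zero_le_one)
    have "(real_of_int (g i))^2 \<le> X^2"
      by (metis abs_ge_zero f1 power2_abs power_mono)
    moreover have "1 \<le> X^2" using X1 by (simp add: one_le_power)
    ultimately have f2: "\<bar>w (g i)\<bar> \<le> 2 * X^2" using w[of "g i"] by linarith
    have f3: "Lf b (g i) = c / real b ^ (i+1)" unfolding g_def c_def by (rule Lf_g[OF b])
    have p2: "(2::real)^i \<le> real b ^ (i+1)"
    proof -
      have "(2::real)^i \<le> 2^(i+1)" by (simp add: power_increasing)
      also have "\<dots> \<le> real b ^ (i+1)" using b by (intro power_mono) auto
      finally show ?thesis .
    qed
    have pos: "(0::real) < real b ^ (i+1) * 2^i" using b by simp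
    have f4: "Lf b (g i) \<le> c / 2^i" unfolding f3 using c1 p2 pos by (intro divide_left_mono) auto
    have f5: "Lf b (g i) \<ge> 0" using Lf_bounds[OF b] by simp
    have "norm (norm (w (g i) * Lf b (g i))) = \<bar>w (g i)\<bar> * Lf b (g i)" using f5 by (simp add: abs_mult)
    also have "\<dots> \<le> (2 * X^2) * (c / 2^i)" using f2 f4 f5 by (intro mult_mono) auto
    also have "\<dots> = (2 * c^3) * ((real i + 1)^2 / 2^i)" unfolding X_def by (simp add: power2_eq_square power3_eq_cube)
    finally show ?thesis .
  qed
  have "summable (\<lambda>i. norm (w (g i) * Lf b (g i)))"
    by (rule summable_comparison_test[OF _ summable_mult[OF sum_geo2]]) (use bound in auto)
  then have "(\<lambda>i. w (g i) * Lf b (g i)) summable_on UNIV"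
    by (rule norm_summable_imp_summable_on)
  then have "(\<lambda>d. w d * Lf b d) summable_on range g"
    using summable_on_reindex[OF inj, of "\<lambda>d. w d * Lf b d"] by (simp add: o_def)
  moreover have "Lf b d = 0" if "d \<notin> range g" for d
    using that Lf_out[OF b, of d] unfolding g_def by auto
  ultimately show ?thesis
    by (subst summable_on_cong_neutral[where T="range g" and g="\<lambda>d. w d * Lf b d"]) auto
qed

lemma Lf_summ:
  assumes b: "b \<ge> 2"
  shows "\<exists>S0 S1 S2. MOM (Lf b) S0 S1 S2"
proof -
  have "(\<lambda>d. 1 * Lf b d) summable_on UNIV" by (rule Lf_summ_gen[OF b]) simp
  moreover have "(\<lambda>d. real_of_int d * Lf b d) summable_on UNIV"
  proof (rule Lf_summ_gen[OF b])
    fix d :: int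
    define x where "x = real_of_int d"
    have sq: "\<bar>x\<bar> * \<bar>x\<bar> = x^2" by (simp add: power2_eq_square)
    have "\<bar>x\<bar> \<le> x^2 + 1"
    proof (cases "\<bar>x\<bar> \<le> 1")
      case True
      moreover have "0 \<le> x^2" by simp
      ultimately show ?thesis by linarith
    next
      case False
      then have "\<bar>x\<bar> * 1 \<le> \<bar>x\<bar> * \<bar>x\<bar>" by (intro mult_left_mono) auto
      then show ?thesis using sq by linarith
    qed
    then show "\<bar>real_of_int d\<bar> \<le> (real_of_int d)^2 + 1" unfolding x_def .
  qed
  moreover have "(\<lambda>d. (real_of_int d)^2 * Lf b d) summable_on UNIV" by (rule Lf_summ_gen[OF b]) simp
  ultimately show ?thesis unfolding MOM_def summable_on_def by auto
qed



lemma MOM_mu0: "MOM (mu b 0) 1 0 0"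
proof -
  have m: "mu b 0 = (\<lambda>d. if d = 0 then 1 else 0)" by (rule ext) (simp add: mu0)
  have "((\<lambda>d::int. if d = 0 then 1 else 0) has_sum (1::real)) UNIV"
    by (rule has_sum_finite_neutralI[of "{0}"]) auto
  moreover have "((\<lambda>d::int. real_of_int d * (if d = 0 then 1 else 0)) has_sum (0::real)) UNIV"
    by (rule has_sum_finite_neutralI[of "{0}"]) auto
  moreover have "((\<lambda>d::int. (real_of_int d)^2 * (if d = 0 then 1 else 0)) has_sum (0::real)) UNIV"
    by (rule has_sum_finite_neutralI[of "{0}"]) auto
  ultimately show ?thesis unfolding MOM_def m by simp
qed

lemma MOM_ex:
  assumes b: "b \<ge> 2"
  shows "\<exists>s. MOM (mu b r) 1 0 s"
proof (induction r rule: less_induct)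
  case (less r)
  consider "r = 0" | "r = 1" | "r \<ge> 2" by linarith
  then show ?case
  proof cases
    case 1 then show ?thesis using MOM_mu0 by blast
  next
    case 2
    have m1: "mu b 1 = Lf b" by (rule ext) (rule mu1[OF b])
    obtain S0 S1 S2 where S: "MOM (mu b 1) S0 S1 S2" using Lf_summ[OF b] unfolding m1 by blast
    have d: "1 div b = 0" "1 mod b = 1" using b by auto
    have "MOM (mu b 1) (((real b - 1)*1 + 1*S0)/real b) (((real b - 1)*(0 + 1*1) + 1*(S1 + (1 - real b)*S0))/real b)
       (((real b - 1)*(0 + 2*1*0 + 1^2*1) + 1*(S2 + 2*(1 - real b)*S1 + (1 - real b)^2*S0))/real b)"
      using MOM_step[OF b, of 1 1 0 0 S0 S1 S2] MOM_mu0 S unfolding d by simp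
    from MOM_unique[OF S this] have e0: "S0 = ((real b - 1) + S0)/real b"
      and e1: "S1 = ((real b - 1) + (S1 + (1 - real b)*S0))/real b"
      and e2: "S2 = ((real b - 1) + (S2 + 2*(1 - real b)*S1 + (1 - real b)^2*S0))/real b" by simp_all
    have bp: "real b - 1 > 0" using b by simp
    have "S0 * real b = (real b - 1) + S0" using e0 b by (simp add: field_simps)
    then have "S0 * (real b - 1) = 1 * (real b - 1)" by (simp add: algebra_simps)
    then have s0: "S0 = 1" using bp by simp
    have "S1 * real b = S1" using e1 b s0 by (simp add: field_simps)
    then have s1: "S1 = 0" using b by (simp add: algebra_simps)
    show ?thesis using S s0 s1 unfolding 2 by blast
  next
    case 3
    define q where "q = r div b"
    define a where "a = r mod b"
    have r: "b*q + a = r" unfolding q_def a_def by (rule mult_div_mod_eq)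
    have qr: "q < r" using b 3 unfolding q_def by simp
    obtain s where s: "MOM (mu b q) 1 0 s" using less[OF qr] by blast
    show ?thesis
    proof (cases "a = 0")
      case True
      have "mu b r = mu b q"
      proof
        fix d show "mu b r d = mu b q d" using mu_rec[OF b, of r d] True b unfolding q_def[symmetric] a_def[symmetric] by simp
      qed
      then show ?thesis using s by auto
    next
      case False
      have q1r: "q + 1 < r"
      proof -
        have "q + 1 < b*q + a"
        proof (cases "q = 0")
          case True then show ?thesis using r 3 by simp
        next
          case False
          then have "q + 1 \<le> 2*q" by simp
          also have "\<dots> \<le> b*q" using b by simp
          finally show ?thesis using \<open>a \<noteq> 0\<close> by simp
        qed
        then show ?thesis using r by simp
      qed
      obtain t where t: "MOM (mu b (q+1)) 1 0 t" using less[OF q1r] by blast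
      have "MOM (mu b r) (((real b - real a)*1 + real a*1)/real b) (((real b - real a)*(0 + real a*1) + real a*(0 + (real a - real b)*1))/real b)
         (((real b - real a)*(s + 2*real a*0 + (real a)^2*1) + real a*(t + 2*(real a - real b)*0 + (real a - real b)^2*1))/real b)"
        using MOM_step[OF b, of r 1 0 s 1 0 t] s t unfolding q_def[symmetric] a_def[symmetric] by simp
      then have "MOM (mu b r) 1 0 (((real b - real a)*(s + (real a)^2) + real a*(t + (real a - real b)^2))/real b)"
        by (rule MOM_eq) (use b in \<open>simp_all add: field_simps\<close>)
      then show ?thesis by blast
    qed
  qed
qed

lemma MOM_all:
  assumes b: "b \<ge> 2"
  shows "MOM (mu b r) 1 0 (variance_int (mu b r))"
  using MOM_ex[OF b, of r] MOM_var by metis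

lemma W_rec:
  assumes b: "b \<ge> 2"
  defines "W \<equiv> \<lambda>r. variance_int (mu b r)"
  shows "W r = ((real b - real (r mod b)) * W (r div b) + real (r mod b) * W (r div b + 1)) / real b
     + real (r mod b) * (real b - real (r mod b))"
proof -
  have "MOM (mu b r) (((real b - real (r mod b))*1 + real (r mod b)*1)/real b)
     (((real b - real (r mod b))*(0 + real (r mod b)*1) + real (r mod b)*(0 + (real (r mod b) - real b)*1))/real b)
     (((real b - real (r mod b))*(W (r div b) + 2*real (r mod b)*0 + (real (r mod b))^2*1)
       + real (r mod b)*(W (r div b + 1) + 2*(real (r mod b) - real b)*0 + (real (r mod b) - real b)^2*1))/real b)"
    using MOM_step[OF b MOM_all[OF b] MOM_all[OF b]] unfolding W_def .
  from MOM_unique[OF MOM_all[OF b, of r] this]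
  have "W r = ((real b - real (r mod b))*(W (r div b) + (real (r mod b))^2)
       + real (r mod b)*(W (r div b + 1) + (real (r mod b) - real b)^2))/real b"
    unfolding W_def by simp
  then show ?thesis using b by (simp add: field_simps power2_eq_square)
qed

lemma W_diff:
  assumes b: "b \<ge> 2"
  shows "\<bar>variance_int (mu b (r + 1)) - variance_int (mu b r)\<bar> \<le> real b"
proof (induction r rule: less_induct)
  case (less r)
  define W where "W = (\<lambda>r. variance_int (mu b r))"
  have Wr: "W n = ((real b - real (n mod b)) * W (n div b) + real (n mod b) * W (n div b + 1)) / real b
     + real (n mod b) * (real b - real (n mod b))" for n
    unfolding W_def by (rule W_rec[OF b])
  have bp: "real b > 0" using b by simp
  show ?case
  proof (cases "r = 0")
    case True
    have W0: "W 0 = 0" unfolding W_def using MOM_var[OF MOM_mu0] .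
    have d: "1 div b = 0" "1 mod b = 1" using b by auto
    have "W 1 = ((real b - 1) * W 0 + W 1) / real b + (real b - 1)"
      using Wr[of 1] unfolding d by simp
    then have "W 1 * real b = W 1 + (real b - 1) * real b" using W0 bp by (simp add: field_simps)
    then have "W 1 * (real b - 1) = real b * (real b - 1)" by (simp add: algebra_simps)
    then have "W 1 = real b" using b by simp
    then show ?thesis using True W0 unfolding W_def by simp
  next
    case False
    define q where "q = r div b"
    define a where "a = r mod b"
    have r: "b*q + a = r" unfolding q_def a_def by (rule mult_div_mod_eq)
    have ab: "a < b" using b unfolding a_def by simp
    have qr: "q < r" using b False unfolding q_def by simp
    have IH: "\<bar>W (q+1) - W q\<bar> \<le> real b" using less[OF qr] unfolding W_def .
    have Wr': "W r = ((real b - real a) * W q + real a * W (q+1)) / real b + real a * (real b - real a)"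
      using Wr[of r] unfolding q_def a_def .
    have IH': "\<bar>(W (q+1) - W q) / real b\<bar> \<le> 1" using IH bp by (simp add: abs_divide divide_le_eq)
    show ?thesis
    proof (cases "a + 1 < b")
      case True
      have e: "r + 1 = (a+1) + q*b" using r by (simp add: mult.commute)
      have dq: "(r+1) div b = q" "(r+1) mod b = a + 1" unfolding e using True
        by (simp_all only: div_mult_self1 mod_mult_self1) simp_all
      have Wr1: "W (r+1) = ((real b - real (a+1)) * W q + real (a+1) * W (q+1)) / real b + real (a+1) * (real b - real (a+1))"
        using Wr[of "r+1"] unfolding dq .
      have "W (r+1) - W r = (W (q+1) - W q) / real b + (real b - 2*real a - 1)"
        unfolding Wr1 Wr' using bp by (simp add: field_simps)
      moreover have "\<bar>real b - 2*real a - 1\<bar> \<le> real b - 1" using True by auto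
      ultimately have "\<bar>W (r+1) - W r\<bar> \<le> real b" using IH' by linarith
      then show ?thesis unfolding W_def .
    next
      case False
      then have aa: "a + 1 = b" using ab by simp
      have e: "r + 1 = b*(q+1) + 0" using r aa by simp
      have dq: "(r+1) div b = q+1" "(r+1) mod b = 0" unfolding e using b by simp_all
      have Wr1: "W (r+1) = W (q+1)"
        using Wr[of "r+1"] bp unfolding dq by simp
      have ra: "real a = real b - 1" using aa by (metis add_diff_cancel_right' of_nat_1 of_nat_add)
      have "W (r+1) - W r = (W (q+1) - W q) / real b - (real b - 1)"
        unfolding Wr1 Wr' ra using bp by (simp add: field_simps)
      moreover have "real b - 1 \<ge> 0" using b by simp
      ultimately have "\<bar>W (r+1) - W r\<bar> \<le> real b" using IH' by linarith
      then show ?thesis unfolding W_def .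
    qed
  qed
qed

theorem mainTheorem14:
  fixes b r :: nat
  assumes "b \<ge> 2" and "r \<ge> 1"
  shows "\<bar>variance_int (mu b (r + 1)) - variance_int (mu b r)\<bar> \<le> real b"
  by (rule W_diff[OF assms(1)])


end
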